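(* Let $f:U\to\mathbb{H}$ be as in the lemma asserting that $C$ is real-valued (a smooth diffeomorphism of an open $U\subseteq\mathbb{R}^4$ onto an open set taking line segments to circle arcs or segments, with $\partial_\alpha A_\alpha=B_\alpha A_\alpha$, $A_\alpha=\partial_\alpha f$, and $C$ real-valued with $\partial_\alpha B_\beta=\tfrac12B_\alpha B_\beta+\tfrac13C(\overline{A_\alpha}A_\beta+\overline{A_\beta}A_\alpha+A_\alpha\overline{A_\beta})$). Suppose $0\in U$, $A_\alpha(0)=\alpha$ for all $\alpha\in\mathbb{R}^4=\mathbb{H}$, and $C(0)\neq0$. Then there exist a real-valued linear function $p$ on $\mathbb{R}^4$ and a quaternion $q$ such that $B_\alpha(0)=p(\alpha)+\alpha q$ for all $\alpha$. Consequently, if also $f(0)=0$, the 3-jet of $f$ at $0$ is $$x+\tfrac12\bigl(p(x)+xq\bigr)x+\tfrac16\Bigl(\tfrac32\bigl(p(x)+xq\bigr)^2+C(0)|x|^2\Bigr)x.$$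
   Context: $\mathbb{R}^4$ is identified with the quaternions $\mathbb{H}$; $\partial_\alpha$ is the directional derivative along a constant vector field $\alpha$; products are quaternion products, $\bar{\cdot}$ conjugation, $|\cdot|$ the norm. *)

theory Defs
  imports "HOL-Analysis.Analysis"
begin

text \<open>The quaternions are identified with real^4, coordinates (1,i,j,k) in positions 1..4.\<close>

type_synonym quat = "real ^ 4"

definition qmult :: "quat \<Rightarrow> quat \<Rightarrow> quat" (infixl "\<star>" 70) where
  "qmult x y = vector
     [x$1*y$1 - x$2*y$2 - x$3*y$3 - x$4*y$4,
      x$1*y$2 + x$2*y$1 + x$3*y$4 - x$4*y$3,
      x$1*y$3 - x$2*y$4 + x$3*y$1 + x$4*y$2,
      x$1*y$4 + x$2*y$3 - x$3*y$2 + x$4*y$1]"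

definition qcnj :: "quat \<Rightarrow> quat" where
  "qcnj x = vector [x$1, - x$2, - x$3, - x$4]"

definition qreal :: "real \<Rightarrow> quat" where
  "qreal r = vector [r, 0, 0, 0]"

definition dderiv :: "quat \<Rightarrow> (quat \<Rightarrow> 'b::real_normed_vector) \<Rightarrow> quat \<Rightarrow> 'b" where
  "dderiv \<alpha> g x = frechet_derivative g (at x) \<alpha>"

fun dpow :: "quat list \<Rightarrow> (quat \<Rightarrow> 'b::real_normed_vector) \<Rightarrow> quat \<Rightarrow> 'b" where
  "dpow [] g = g"
| "dpow (a # as) g = dderiv a (dpow as g)"

definition smooth_on :: "quat set \<Rightarrow> (quat \<Rightarrow> 'b::real_normed_vector) \<Rightarrow> bool" where
  "smooth_on U g \<longleftrightarrow> (\<forall>as. dpow as g differentiable_on U)"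

definition smooth_diffeo :: "quat set \<Rightarrow> (quat \<Rightarrow> quat) \<Rightarrow> bool" where
  "smooth_diffeo U f \<longleftrightarrow> open U \<and> open (f ` U) \<and> inj_on f U \<and> smooth_on U f
     \<and> smooth_on (f ` U) (inv_into U f)"

definition circle_arc :: "quat set \<Rightarrow> bool" where
  "circle_arc S \<longleftrightarrow> (\<exists>c u v r t0 t1. r > 0 \<and> norm u = 1 \<and> norm v = 1 \<and> inner u v = 0
      \<and> t0 \<le> t1 \<and> S = (\<lambda>t. c + r *\<^sub>R (cos t *\<^sub>R u + sin t *\<^sub>R v)) ` {t0..t1})"

definition segments_to_arcs :: "quat set \<Rightarrow> (quat \<Rightarrow> quat) \<Rightarrow> bool" where
  "segments_to_arcs U f \<longleftrightarrow> (\<forall>a b. closed_segment a b \<subseteq> U \<longrightarrow>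
      (circle_arc (f ` closed_segment a b) \<or> (\<exists>c d. f ` closed_segment a b = closed_segment c d)))"

end

theory Submission
  imports Defs
begin


lemma vector4_nth [simp]:
  "(vector [a,b,c,d] :: 'a::zero^4) $ 1 = a" "(vector [a,b,c,d] :: 'a::zero^4) $ 2 = b"
  "(vector [a,b,c,d] :: 'a::zero^4) $ 3 = c" "(vector [a,b,c,d] :: 'a::zero^4) $ 4 = d"
  by (simp_all add: vector_def)

lemma qmult_nth [simp]:
  "(x \<star> y) $ 1 = x$1*y$1 - x$2*y$2 - x$3*y$3 - x$4*y$4"
  "(x \<star> y) $ 2 = x$1*y$2 + x$2*y$1 + x$3*y$4 - x$4*y$3"
  "(x \<star> y) $ 3 = x$1*y$3 - x$2*y$4 + x$3*y$1 + x$4*y$2"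
  "(x \<star> y) $ 4 = x$1*y$4 + x$2*y$3 - x$3*y$2 + x$4*y$1"
  by (simp_all add: qmult_def)

lemma qcnj_nth [simp]:
  "qcnj x $ 1 = x$1" "qcnj x $ 2 = - x$2" "qcnj x $ 3 = - x$3" "qcnj x $ 4 = - x$4"
  by (simp_all add: qcnj_def)

lemma qreal_nth [simp]:
  "qreal r $ 1 = r" "qreal r $ 2 = 0" "qreal r $ 3 = 0" "qreal r $ 4 = 0"
  by (simp_all add: qreal_def)

lemma quat_eq_iff: "(x::quat) = y \<longleftrightarrow> x$1 = y$1 \<and> x$2 = y$2 \<and> x$3 = y$3 \<and> x$4 = y$4"
  by (simp add: vec_eq_iff forall_4)

lemma quat_norm_sq: "(norm (x::quat))^2 = x$1^2 + x$2^2 + x$3^2 + x$4^2"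
  by (simp add: norm_vec_def L2_set_def sum_4)

lemma qmult_assoc: "(x \<star> y) \<star> z = x \<star> (y \<star> z)"
  by (simp add: quat_eq_iff algebra_simps)

lemma qmult_add_left: "(x + y) \<star> z = x \<star> z + y \<star> z"
  by (simp add: quat_eq_iff algebra_simps)
lemma qmult_add_right: "z \<star> (x + y) = z \<star> x + z \<star> y"
  by (simp add: quat_eq_iff algebra_simps)
lemma qmult_diff_left: "(x - y) \<star> z = x \<star> z - y \<star> z"
  by (simp add: quat_eq_iff algebra_simps)
lemma qmult_diff_right: "z \<star> (x - y) = z \<star> x - z \<star> y"
  by (simp add: quat_eq_iff algebra_simps)
lemma qmult_scaleR_left: "(r *\<^sub>R x) \<star> z = r *\<^sub>R (x \<star> z)"
  by (simp add: quat_eq_iff algebra_simps)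
lemma qmult_scaleR_right: "z \<star> (r *\<^sub>R x) = r *\<^sub>R (z \<star> x)"
  by (simp add: quat_eq_iff algebra_simps)
lemma qmult_zero [simp]: "0 \<star> x = 0" "x \<star> 0 = 0"
  by (simp_all add: quat_eq_iff)

lemma four_squares: "((x1::real)*y1 - x2*y2 - x3*y3 - x4*y4)^2 + (x1*y2 + x2*y1 + x3*y4 - x4*y3)^2 + (x1*y3 - x2*y4 + x3*y1 + x4*y2)^2 + (x1*y4 + x2*y3 - x3*y2 + x4*y1)^2
  = (x1^2+x2^2+x3^2+x4^2)*(y1^2+y2^2+y3^2+y4^2)"
  by algebra

lemma qmult_norm_sq: "(norm (a \<star> b))^2 = (norm a * norm b)^2"
  by (simp add: quat_norm_sq power_mult_distrib four_squares)

lemma bounded_bilinear_qmult: "bounded_bilinear qmult"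
proof (rule bounded_bilinear.intro)
  show "\<exists>K. \<forall>a b. norm (a \<star> b) \<le> norm a * norm b * K"
  proof (intro exI allI)
    fix a b :: quat
    have "(norm (a \<star> b))^2 = (norm a * norm b)^2"
      by (rule qmult_norm_sq)
    then show "norm (a \<star> b) \<le> norm a * norm b * 1"
      by (simp add: power2_eq_iff_nonneg)
  qed
qed (simp_all add: qmult_add_left qmult_add_right qmult_scaleR_left qmult_scaleR_right)

lemma qmult_norm: "norm (a \<star> b) = norm a * norm b"
proof -
  have "(norm (a \<star> b))^2 = (norm a * norm b)^2"
    by (rule qmult_norm_sq)
  then show ?thesis by (simp add: power2_eq_iff_nonneg)
qed

lemma qmult_eq_0_iff: "a \<star> b = 0 \<longleftrightarrow> a = 0 \<or> b = 0"
  by (metis qmult_norm norm_eq_zero mult_eq_0_iff)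

lemma qmult_cancel_right: "w \<noteq> 0 \<Longrightarrow> a \<star> w = b \<star> w \<Longrightarrow> a = b"
  by (metis qmult_diff_left qmult_eq_0_iff right_minus_eq)

lemma qreal_mult: "qreal r \<star> x = r *\<^sub>R x" "x \<star> qreal r = r *\<^sub>R x"
  by (simp_all add: quat_eq_iff algebra_simps)

lemma qcnj_mult_self: "qcnj a \<star> a = qreal ((norm a)^2)" "a \<star> qcnj a = qreal ((norm a)^2)"
  using quat_norm_sq[of a] by (simp_all add: quat_eq_iff power2_eq_square algebra_simps)



lemma dpow_append: "dpow (bs @ as) g = dpow bs (dpow as g)"
  by (induction bs) auto

lemma smooth_dpow: "smooth_on U g \<Longrightarrow> smooth_on U (dpow as g)"
  unfolding smooth_on_def by (simp add: dpow_append[symmetric])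

lemma dpow_differentiable:
  assumes "smooth_on U g" "open U" "x \<in> U"
  shows "dpow as g differentiable (at x)"
  using assms unfolding smooth_on_def
  by (meson differentiable_on_eq_differentiable_at)

lemma dpow_has_derivative:
  assumes "smooth_on U g" "open U" "x \<in> U"
  shows "(dpow as g has_derivative (\<lambda>v. dpow (v # as) g x)) (at x)"
proof -
  have "(dpow as g has_derivative frechet_derivative (dpow as g) (at x)) (at x)"
    using dpow_differentiable[OF assms] frechet_derivative_works by blast
  then show ?thesis by (simp add: dderiv_def)
qed

lemma dpow_linear:
  assumes "smooth_on U g" "open U" "x \<in> U"
  shows "linear (\<lambda>v. dpow (v # as) g x)"
  using dpow_has_derivative[OF assms] has_derivative_linear by blast

lemma dpow_continuous:
  assumes "smooth_on U g" "open U" "x \<in> U"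
  shows "isCont (dpow as g) x"
  using dpow_differentiable[OF assms] differentiable_imp_continuous_within by blast

lemma dpow_line:
  assumes "smooth_on U g" "open U" "y + t *\<^sub>R v \<in> U"
  shows "((\<lambda>s. dpow as g (y + s *\<^sub>R v)) has_vector_derivative dpow (v # as) g (y + t *\<^sub>R v)) (at t)"
proof -
  have d1: "((\<lambda>s. y + s *\<^sub>R v) has_derivative (\<lambda>h. h *\<^sub>R v)) (at t)"
    by (auto intro!: derivative_eq_intros)
  have d2: "(dpow as g has_derivative (\<lambda>w. dpow (w # as) g (y + t *\<^sub>R v))) (at (y + t *\<^sub>R v))"
    by (rule dpow_has_derivative[OF assms])
  have lin: "linear (\<lambda>w. dpow (w # as) g (y + t *\<^sub>R v))"
    by (rule dpow_linear[OF assms])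
  have "((\<lambda>s. dpow as g (y + s *\<^sub>R v)) has_derivative (\<lambda>h. dpow ((h *\<^sub>R v) # as) g (y + t *\<^sub>R v))) (at t)"
    using diff_chain_at[OF d1 d2] by (simp add: o_def)
  moreover have "(\<lambda>h. dpow ((h *\<^sub>R v) # as) g (y + t *\<^sub>R v)) = (\<lambda>h. h *\<^sub>R dpow (v # as) g (y + t *\<^sub>R v))"
    using linear_scale[OF lin] by auto
  ultimately show ?thesis by (simp add: has_vector_derivative_def)
qed

lemma dpow_line0:
  assumes "smooth_on U g" "open U" "y \<in> U"
  shows "((\<lambda>s. dpow as g (y + s *\<^sub>R v)) has_vector_derivative dpow (v # as) g y) (at 0)"
  using dpow_line[OF assms(1,2), of y 0 v as] assms(3) by simp

lemma mvb:
  fixes f :: "real \<Rightarrow> 'a::real_normed_vector"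
  assumes "a \<le> b" "\<And>t. t \<in> {a..b} \<Longrightarrow> (f has_vector_derivative f' t) (at t)"
    "\<And>t. t \<in> {a..b} \<Longrightarrow> norm (f' t) \<le> M"
  shows "norm (f b - f a) \<le> M * (b - a)"
proof (cases "a = b")
  case True then show ?thesis by simp
next
  case False
  then have ab: "a < b" using assms(1) by simp
  have cont: "continuous_on {a..b} f"
    by (rule continuous_at_imp_continuous_on) (use assms(2) has_vector_derivative_continuous in blast)
  have "norm (f b - f a) \<le> M * b - M * a"
  proof (rule differentiable_bound_general[OF ab cont, where \<phi>="\<lambda>t. M * t" and \<phi>'="\<lambda>t. M"])
    show "continuous_on {a..b} (\<lambda>t. M * t)" by (intro continuous_intros)
    fix x assume "a < x" "x < b"
    then show "(f has_vector_derivative f' x) (at x)" "norm (f' x) \<le> M" using assms by auto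
    show "((\<lambda>t. M * t) has_vector_derivative M) (at x)"
      unfolding has_real_derivative_iff_has_vector_derivative[symmetric]
      by (rule DERIV_cmult_Id)
  qed
  then show ?thesis by (simp add: algebra_simps)
qed



lemma schwarz_half:
  fixes g :: "quat \<Rightarrow> 'b::real_normed_vector"
  assumes sm: "smooth_on U g" and op: "open U" and s: "s \<ge> 0"
    and hU: "\<And>r t. r \<in> {0..s} \<Longrightarrow> t \<in> {0..s} \<Longrightarrow> y + r *\<^sub>R a + t *\<^sub>R b \<in> U"
    and hb: "\<And>r t. r \<in> {0..s} \<Longrightarrow> t \<in> {0..s} \<Longrightarrow> norm (dpow [a,b] g (y + r *\<^sub>R a + t *\<^sub>R b) - M) \<le> e"
  shows "norm (g (y + s *\<^sub>R a + s *\<^sub>R b) - g (y + s *\<^sub>R a) - g (y + s *\<^sub>R b) + g y - (s * s) *\<^sub>R M) \<le> e * s * s"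
proof -
  define \<phi> where "\<phi> t = g (y + s *\<^sub>R a + t *\<^sub>R b) - g (y + t *\<^sub>R b) - (t * s) *\<^sub>R M" for t
  define \<phi>' where "\<phi>' t = dpow [b] g (y + s *\<^sub>R a + t *\<^sub>R b) - dpow [b] g (y + t *\<^sub>R b) - s *\<^sub>R M" for t
  have der: "(\<phi> has_vector_derivative \<phi>' t) (at t)" if t: "t \<in> {0..s}" for t
  proof -
    have u1: "(y + s *\<^sub>R a) + t *\<^sub>R b \<in> U" using hU[of s t] t s by (simp add: algebra_simps)
    have u2: "y + t *\<^sub>R b \<in> U" using hU[of 0 t] t s by simp
    have d1: "((\<lambda>t. g ((y + s *\<^sub>R a) + t *\<^sub>R b)) has_vector_derivative dpow [b] g ((y + s *\<^sub>R a) + t *\<^sub>R b)) (at t)"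
      using dpow_line[OF sm op u1, of "[]"] by simp
    have d2: "((\<lambda>t. g (y + t *\<^sub>R b)) has_vector_derivative dpow [b] g (y + t *\<^sub>R b)) (at t)"
      using dpow_line[OF sm op u2, of "[]"] by simp
    have d3: "((\<lambda>t. (t * s) *\<^sub>R M) has_vector_derivative s *\<^sub>R M) (at t)"
      by (auto intro!: derivative_eq_intros)
    show ?thesis unfolding \<phi>_def \<phi>'_def
      using has_vector_derivative_diff[OF has_vector_derivative_diff[OF d1 d2] d3]
      by (simp add: algebra_simps)
  qed
  have bnd: "norm (\<phi>' t) \<le> e * s" if t: "t \<in> {0..s}" for t
  proof -
    define ch where "ch r = dpow [b] g ((y + t *\<^sub>R b) + r *\<^sub>R a) - r *\<^sub>R M" for r
    have "norm (ch s - ch 0) \<le> e * (s - 0)"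
    proof (rule mvb[OF s])
      fix r assume r: "r \<in> {0..s}"
      have u: "(y + t *\<^sub>R b) + r *\<^sub>R a \<in> U" using hU[OF r t] by (simp add: algebra_simps)
      have d1: "((\<lambda>r. dpow [b] g ((y + t *\<^sub>R b) + r *\<^sub>R a)) has_vector_derivative dpow [a,b] g ((y + t *\<^sub>R b) + r *\<^sub>R a)) (at r)"
        using dpow_line[OF sm op u, of "[b]"] by simp
      have d3: "((\<lambda>r. r *\<^sub>R M) has_vector_derivative M) (at r)"
        by (auto intro!: derivative_eq_intros)
      show "(ch has_vector_derivative (dpow [a,b] g ((y + t *\<^sub>R b) + r *\<^sub>R a) - M)) (at r)"
        unfolding ch_def using has_vector_derivative_diff[OF d1 d3] by simp
      show "norm (dpow [a,b] g ((y + t *\<^sub>R b) + r *\<^sub>R a) - M) \<le> e"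
        using hb[OF r t] by (simp add: algebra_simps)
    qed
    moreover have "ch s - ch 0 = \<phi>' t" unfolding ch_def \<phi>'_def by (simp add: algebra_simps)
    ultimately show ?thesis by simp
  qed
  have "norm (\<phi> s - \<phi> 0) \<le> (e * s) * (s - 0)"
    by (rule mvb[OF s der bnd])
  moreover have "\<phi> s - \<phi> 0 = g (y + s *\<^sub>R a + s *\<^sub>R b) - g (y + s *\<^sub>R a) - g (y + s *\<^sub>R b) + g y - (s * s) *\<^sub>R M"
    unfolding \<phi>_def by (simp add: algebra_simps)
  ultimately show ?thesis by (simp add: algebra_simps)
qed

lemma dpow_sym:
  fixes g :: "quat \<Rightarrow> 'b::real_normed_vector"
  assumes sm: "smooth_on U g" and op: "open U" and y: "y \<in> U"
  shows "dpow [a,b] g y = dpow [b,a] g y"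
proof -
  define M where "M = dpow [a,b] g y"
  define M' where "M' = dpow [b,a] g y"
  have main: "norm (M - M') \<le> 2 * e" if e: "e > 0" for e
  proof -
    have c1: "isCont (dpow [a,b] g) y" by (rule dpow_continuous[OF sm op y])
    have c2: "isCont (dpow [b,a] g) y" by (rule dpow_continuous[OF sm op y])
    obtain d1 where d1: "d1 > 0" "\<And>z. dist z y < d1 \<Longrightarrow> dist (dpow [a,b] g z) M < e"
      using c1 e unfolding continuous_at_eps_delta M_def by blast
    obtain d2 where d2: "d2 > 0" "\<And>z. dist z y < d2 \<Longrightarrow> dist (dpow [b,a] g z) M' < e"
      using c2 e unfolding continuous_at_eps_delta M'_def by blast
    obtain d3 where d3: "d3 > 0" "ball y d3 \<subseteq> U" using op y by (rule openE)
    define d where "d = min d1 (min d2 d3)"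
    have d: "d > 0" "d \<le> d1" "d \<le> d2" "d \<le> d3" using d1 d2 d3 by (auto simp: d_def)
    define s where "s = d / (2 * (norm a + norm b + 1))"
    have "2 * (norm a + norm b + 1) > 0" by (smt (verit) norm_ge_zero)
    then have s: "s > 0" using d unfolding s_def by (intro divide_pos_pos) auto
    have close: "dist (y + r *\<^sub>R a + t *\<^sub>R b) y < d" if "r \<in> {0..s}" "t \<in> {0..s}" for r t
    proof -
      have "dist (y + r *\<^sub>R a + t *\<^sub>R b) y = norm (r *\<^sub>R a + t *\<^sub>R b)" by (simp add: dist_norm)
      also have "\<dots> \<le> r * norm a + t * norm b"
        using that by (smt (verit) atLeastAtMost_iff norm_scaleR norm_triangle_ineq abs_of_nonneg)
      also have "\<dots> \<le> s * norm a + s * norm b"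
        using that by (intro add_mono mult_right_mono) auto
      also have "\<dots> < d"
      proof -
        have "norm a + norm b < 2 * (norm a + norm b + 1)" by (smt (verit) norm_ge_zero)
        then have "s * (norm a + norm b) < s * (2 * (norm a + norm b + 1))"
          using s by (intro mult_strict_left_mono) auto
        also have "\<dots> = d" using d \<open>2 * (norm a + norm b + 1) > 0\<close> by (simp add: s_def)
        finally show ?thesis by (simp add: algebra_simps)
      qed
      finally show ?thesis .
    qed
    have h1: "norm (g (y + s *\<^sub>R a + s *\<^sub>R b) - g (y + s *\<^sub>R a) - g (y + s *\<^sub>R b) + g y - (s * s) *\<^sub>R M) \<le> e * s * s"
    proof (rule schwarz_half[OF sm op less_imp_le[OF s]])
      fix r t assume rt: "r \<in> {0..s}" "t \<in> {0..s}"
      show "y + r *\<^sub>R a + t *\<^sub>R b \<in> U" using close[OF rt] d d3 by (auto simp: dist_commute)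
      show "norm (dpow [a,b] g (y + r *\<^sub>R a + t *\<^sub>R b) - M) \<le> e"
        using d1(2)[of "y + r *\<^sub>R a + t *\<^sub>R b"] close[OF rt] d by (simp add: dist_norm)
    qed
    have h2: "norm (g (y + s *\<^sub>R b + s *\<^sub>R a) - g (y + s *\<^sub>R b) - g (y + s *\<^sub>R a) + g y - (s * s) *\<^sub>R M') \<le> e * s * s"
    proof (rule schwarz_half[OF sm op less_imp_le[OF s]])
      fix r t assume rt: "r \<in> {0..s}" "t \<in> {0..s}"
      have eq: "y + r *\<^sub>R b + t *\<^sub>R a = y + t *\<^sub>R a + r *\<^sub>R b" by (simp add: algebra_simps)
      show "y + r *\<^sub>R b + t *\<^sub>R a \<in> U" unfolding eq using close[of t r] rt d d3 by (auto simp: dist_commute)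
      show "norm (dpow [b,a] g (y + r *\<^sub>R b + t *\<^sub>R a) - M') \<le> e"
        unfolding eq using d2(2)[of "y + t *\<^sub>R a + r *\<^sub>R b"] close[of t r] rt d by (simp add: dist_norm)
    qed
    have eq2: "y + s *\<^sub>R b + s *\<^sub>R a = y + s *\<^sub>R a + s *\<^sub>R b" by (simp add: algebra_simps)
    define D where "D = g (y + s *\<^sub>R a + s *\<^sub>R b) - g (y + s *\<^sub>R a) - g (y + s *\<^sub>R b) + g y"
    have h1': "norm (D - (s * s) *\<^sub>R M) \<le> e * s * s" using h1 by (simp add: D_def)
    have h2': "norm (D - (s * s) *\<^sub>R M') \<le> e * s * s" using h2 unfolding eq2 by (simp add: D_def algebra_simps)
    have "norm ((s * s) *\<^sub>R (M - M')) \<le> norm (D - (s * s) *\<^sub>R M') + norm (D - (s * s) *\<^sub>R M)"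
      by (rule order_trans[OF _ norm_triangle_ineq4]) (simp add: algebra_simps)
    also have "\<dots> \<le> (2 * e) * (s * s)" using h1' h2' by simp
    finally have A: "norm ((s * s) *\<^sub>R (M - M')) \<le> (2 * e) * (s * s)" .
    have "norm ((s * s) *\<^sub>R (M - M')) = (s * s) * norm (M - M')" using s by simp
    with A have "(s * s) * norm (M - M') \<le> (s * s) * (2 * e)" by (simp add: mult.commute)
    then show ?thesis using s by (simp add: mult_le_cancel_left_pos)
  qed
  have "norm (M - M') = 0"
  proof (rule ccontr)
    assume "norm (M - M') \<noteq> 0"
    then have p: "norm (M - M') > 0" by simp
    from main[of "norm (M - M') / 4"] p show False by simp
  qed
  then show ?thesis by (simp add: M_def M'_def)
qed



definition qK :: "quat \<Rightarrow> quat \<Rightarrow> quat" where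
  "qK x y = qcnj x \<star> y + qcnj y \<star> x + x \<star> qcnj y"
definition qdB :: "real \<Rightarrow> quat \<Rightarrow> quat \<Rightarrow> quat \<Rightarrow> quat \<Rightarrow> quat" where
  "qdB c bg ba g a = (1/2) *\<^sub>R (bg \<star> ba) + (c/3) *\<^sub>R qK g a"
definition qS :: "quat \<Rightarrow> quat \<Rightarrow> quat \<Rightarrow> quat \<Rightarrow> quat" where
  "qS bg ba g a = (1/2) *\<^sub>R (bg \<star> a + ba \<star> g)"
definition qForm :: "real \<Rightarrow> real \<Rightarrow> quat \<Rightarrow> quat \<Rightarrow> quat \<Rightarrow> quat \<Rightarrow> quat \<Rightarrow> quat \<Rightarrow> quat \<Rightarrow> quat \<Rightarrow> quat \<Rightarrow> quat" where
  "qForm c k g a be bg ba bb sga sgb sab =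
     ((1/2) *\<^sub>R (qdB c bg ba g a \<star> bb + ba \<star> qdB c bg bb g be)
       + (c/3) *\<^sub>R (qK sga be + qK a sgb) + (k/3) *\<^sub>R qK a be) \<star> be
     + ((1/2) *\<^sub>R (ba \<star> bb) + (c/3) *\<^sub>R qK a be) \<star> sgb
     + qdB c bg bb g be \<star> sab"

lemma axis_nth4 [simp]:
  "(axis 1 1 :: quat) $ 1 = 1" "(axis 1 1 :: quat) $ 2 = 0" "(axis 1 1 :: quat) $ 3 = 0" "(axis 1 1 :: quat) $ 4 = 0"
  "(axis 2 1 :: quat) $ 1 = 0" "(axis 2 1 :: quat) $ 2 = 1" "(axis 2 1 :: quat) $ 3 = 0" "(axis 2 1 :: quat) $ 4 = 0"
  "(axis 3 1 :: quat) $ 1 = 0" "(axis 3 1 :: quat) $ 2 = 0" "(axis 3 1 :: quat) $ 3 = 1" "(axis 3 1 :: quat) $ 4 = 0"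
  "(axis 4 1 :: quat) $ 1 = 0" "(axis 4 1 :: quat) $ 2 = 0" "(axis 4 1 :: quat) $ 3 = 0" "(axis 4 1 :: quat) $ 4 = 1"
  by (simp_all add: axis_def)

definition qCub :: "quat \<Rightarrow> quat \<Rightarrow> quat \<Rightarrow> quat \<Rightarrow> quat \<Rightarrow> quat \<Rightarrow> quat" where
  "qCub be bg ba bb sgb sab = (1/4) *\<^sub>R ((bg \<star> ba) \<star> bb \<star> be) + (1/4) *\<^sub>R ((ba \<star> (bg \<star> bb)) \<star> be)
     + (1/2) *\<^sub>R ((ba \<star> bb) \<star> sgb) + (1/2) *\<^sub>R ((bg \<star> bb) \<star> sab)"
definition qLin :: "real \<Rightarrow> real \<Rightarrow> quat \<Rightarrow> quat \<Rightarrow> quat \<Rightarrow> quat \<Rightarrow> quat \<Rightarrow> quat \<Rightarrow> quat \<Rightarrow> quat \<Rightarrow> quat" where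
  "qLin c k g a be ba bb sga sgb sab =
     ((1/2) *\<^sub>R (((c/3) *\<^sub>R qK g a) \<star> bb + ba \<star> ((c/3) *\<^sub>R qK g be))
       + (c/3) *\<^sub>R (qK sga be + qK a sgb) + (k/3) *\<^sub>R qK a be) \<star> be
     + ((c/3) *\<^sub>R qK a be) \<star> sgb
     + ((c/3) *\<^sub>R qK g be) \<star> sab"

lemma qForm_split: "qForm c k g a be bg ba bb sga sgb sab = qCub be bg ba bb sgb sab + qLin c k g a be ba bb sga sgb sab"
  unfolding qForm_def qCub_def qLin_def qdB_def
  by (simp add: qmult_add_left qmult_add_right qmult_scaleR_left qmult_scaleR_right scaleR_add_right algebra_simps)

lemma qCub_sym: "qCub be bg ba bb sgb sab = qCub be ba bg bb sab sgb"
  unfolding qCub_def by (simp add: qmult_assoc algebra_simps)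

lemma qForm_eq_imp_Lin:
  "qForm c k g a be bg ba bb sga sgb sab = qForm c k' a g be ba bg bb sag sab sgb \<Longrightarrow>
   qLin c k g a be ba bb sga sgb sab = qLin c k' a g be bg bb sag sab sgb"
  by (simp add: qForm_split qCub_sym)

lemma alg2:
  assumes "qForm c ku (axis 1 1) (axis 2 1) (axis 1 1) bu bj bu (qS bu bj (axis 1 1) (axis 2 1)) (qS bu bu (axis 1 1) (axis 1 1)) (qS bu bj (axis 1 1) (axis 2 1))
         = qForm c kj (axis 2 1) (axis 1 1) (axis 1 1) bj bu bu (qS bu bj (axis 1 1) (axis 2 1)) (qS bu bj (axis 1 1) (axis 2 1)) (qS bu bu (axis 1 1) (axis 1 1))"
  shows "2*c*bu$2 = kj" "2*c*bj$2 + ku = 0" "c*(bj$3 + bu$4) = 0" "c*(bj$4 - bu$3) = 0"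
proof -
  have e: "(qLin c ku (axis 1 1) (axis 2 1) (axis 1 1) bj bu (qS bu bj (axis 1 1) (axis 2 1)) (qS bu bu (axis 1 1) (axis 1 1)) (qS bu bj (axis 1 1) (axis 2 1))) $ i
     = (qLin c kj (axis 2 1) (axis 1 1) (axis 1 1) bu bu (qS bu bj (axis 1 1) (axis 2 1)) (qS bu bj (axis 1 1) (axis 2 1)) (qS bu bu (axis 1 1) (axis 1 1))) $ i" for i
    using qForm_eq_imp_Lin[OF assms] by simp
  note e1 = e[of 1, unfolded qLin_def qS_def qK_def, simplified]
  note e2 = e[of 2, unfolded qLin_def qS_def qK_def, simplified]
  note e3 = e[of 3, unfolded qLin_def qS_def qK_def, simplified]
  note e4 = e[of 4, unfolded qLin_def qS_def qK_def, simplified]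
  show "2*c*bu$2 = kj" using e1 by (simp add: field_simps; linarith)
  show "2*c*bj$2 + ku = 0" using e2 by (simp add: field_simps; linarith)
  show "c*(bj$3 + bu$4) = 0" using e3 by (simp add: field_simps; linarith)
  show "c*(bj$4 - bu$3) = 0" using e4 by (simp add: field_simps; linarith)
qed

lemma alg3:
  assumes "qForm c ku (axis 1 1) (axis 3 1) (axis 1 1) bu bj bu (qS bu bj (axis 1 1) (axis 3 1)) (qS bu bu (axis 1 1) (axis 1 1)) (qS bu bj (axis 1 1) (axis 3 1))
         = qForm c kj (axis 3 1) (axis 1 1) (axis 1 1) bj bu bu (qS bu bj (axis 1 1) (axis 3 1)) (qS bu bj (axis 1 1) (axis 3 1)) (qS bu bu (axis 1 1) (axis 1 1))"
  shows "2*c*bu$3 = kj" "c*(bj$2 - bu$4) = 0" "2*c*bj$3 + ku = 0" "c*(bu$2 + bj$4) = 0"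
proof -
  have e: "(qLin c ku (axis 1 1) (axis 3 1) (axis 1 1) bj bu (qS bu bj (axis 1 1) (axis 3 1)) (qS bu bu (axis 1 1) (axis 1 1)) (qS bu bj (axis 1 1) (axis 3 1))) $ i
     = (qLin c kj (axis 3 1) (axis 1 1) (axis 1 1) bu bu (qS bu bj (axis 1 1) (axis 3 1)) (qS bu bj (axis 1 1) (axis 3 1)) (qS bu bu (axis 1 1) (axis 1 1))) $ i" for i
    using qForm_eq_imp_Lin[OF assms] by simp
  note e1 = e[of 1, unfolded qLin_def qS_def qK_def, simplified]
  note e2 = e[of 2, unfolded qLin_def qS_def qK_def, simplified]
  note e3 = e[of 3, unfolded qLin_def qS_def qK_def, simplified]
  note e4 = e[of 4, unfolded qLin_def qS_def qK_def, simplified]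
  show "2*c*bu$3 = kj" using e1 by (simp add: field_simps; linarith)
  show "c*(bj$2 - bu$4) = 0" using e2 by (simp add: field_simps; linarith)
  show "2*c*bj$3 + ku = 0" using e3 by (simp add: field_simps; linarith)
  show "c*(bu$2 + bj$4) = 0" using e4 by (simp add: field_simps; linarith)
qed

lemma alg4:
  assumes "qForm c ku (axis 1 1) (axis 4 1) (axis 1 1) bu bj bu (qS bu bj (axis 1 1) (axis 4 1)) (qS bu bu (axis 1 1) (axis 1 1)) (qS bu bj (axis 1 1) (axis 4 1))
         = qForm c kj (axis 4 1) (axis 1 1) (axis 1 1) bj bu bu (qS bu bj (axis 1 1) (axis 4 1)) (qS bu bj (axis 1 1) (axis 4 1)) (qS bu bu (axis 1 1) (axis 1 1))"
  shows "2*c*bu$4 = kj" "c*(bj$2 + bu$3) = 0" "c*(bj$3 - bu$2) = 0" "2*c*bj$4 + ku = 0"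
proof -
  have e: "(qLin c ku (axis 1 1) (axis 4 1) (axis 1 1) bj bu (qS bu bj (axis 1 1) (axis 4 1)) (qS bu bu (axis 1 1) (axis 1 1)) (qS bu bj (axis 1 1) (axis 4 1))) $ i
     = (qLin c kj (axis 4 1) (axis 1 1) (axis 1 1) bu bu (qS bu bj (axis 1 1) (axis 4 1)) (qS bu bj (axis 1 1) (axis 4 1)) (qS bu bu (axis 1 1) (axis 1 1))) $ i" for i
    using qForm_eq_imp_Lin[OF assms] by simp
  note e1 = e[of 1, unfolded qLin_def qS_def qK_def, simplified]
  note e2 = e[of 2, unfolded qLin_def qS_def qK_def, simplified]
  note e3 = e[of 3, unfolded qLin_def qS_def qK_def, simplified]
  note e4 = e[of 4, unfolded qLin_def qS_def qK_def, simplified]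
  show "2*c*bu$4 = kj" using e1 by (simp add: field_simps; linarith)
  show "c*(bj$2 + bu$3) = 0" using e2 by (simp add: field_simps; linarith)
  show "c*(bj$3 - bu$2) = 0" using e3 by (simp add: field_simps; linarith)
  show "2*c*bj$4 + ku = 0" using e4 by (simp add: field_simps; linarith)
qed



lemma qcnj_add: "qcnj (x + y) = qcnj x + qcnj y" by (simp add: quat_eq_iff)
lemma qcnj_scaleR: "qcnj (r *\<^sub>R x) = r *\<^sub>R qcnj x" by (simp add: quat_eq_iff)
lemma qcnj_zero [simp]: "qcnj 0 = 0" by (simp add: quat_eq_iff)

lemma bounded_linear_qcnj: "bounded_linear qcnj"
proof -
  have "linear qcnj" by (rule linearI) (simp_all add: qcnj_add qcnj_scaleR)
  then show ?thesis by (simp add: linear_conv_bounded_linear)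
qed

lemma hvd_qmult [derivative_intros]:
  "(f has_vector_derivative f') (at x within s) \<Longrightarrow> (g has_vector_derivative g') (at x within s) \<Longrightarrow>
   ((\<lambda>x. f x \<star> g x) has_vector_derivative (f x \<star> g' + f' \<star> g x)) (at x within s)"
  by (rule bounded_bilinear.has_vector_derivative[OF bounded_bilinear_qmult])

lemma hvd_qcnj [derivative_intros]:
  "(f has_vector_derivative f') F \<Longrightarrow> ((\<lambda>x. qcnj (f x)) has_vector_derivative qcnj f') F"
  by (rule bounded_linear.has_vector_derivative[OF bounded_linear_qcnj])

lemma hvd_qK [derivative_intros]:
  assumes f: "(f has_vector_derivative f') (at x within s)" and g: "(g has_vector_derivative g') (at x within s)"
  shows "((\<lambda>x. qK (f x) (g x)) has_vector_derivative (qK (f x) g' + qK f' (g x))) (at x within s)"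
proof -
  have 1: "((\<lambda>x. qcnj (f x) \<star> g x) has_vector_derivative (qcnj (f x) \<star> g' + qcnj f' \<star> g x)) (at x within s)"
    by (rule hvd_qmult[OF hvd_qcnj[OF f] g])
  have 2: "((\<lambda>x. qcnj (g x) \<star> f x) has_vector_derivative (qcnj (g x) \<star> f' + qcnj g' \<star> f x)) (at x within s)"
    by (rule hvd_qmult[OF hvd_qcnj[OF g] f])
  have 3: "((\<lambda>x. f x \<star> qcnj (g x)) has_vector_derivative (f x \<star> qcnj g' + f' \<star> qcnj (g x))) (at x within s)"
    by (rule hvd_qmult[OF f hvd_qcnj[OF g]])
  show ?thesis
    unfolding qK_def
    by (rule has_vector_derivative_eq_rhs[OF has_vector_derivative_add[OF has_vector_derivative_add[OF 1 2] 3]])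
       (simp add: algebra_simps)
qed

lemma hvd_nth:
  "(f has_vector_derivative f') F \<Longrightarrow> ((\<lambda>x. f x $ i) has_field_derivative f' $ i) F"
  unfolding has_real_derivative_iff_has_vector_derivative
  by (rule bounded_linear.has_vector_derivative[OF bounded_linear_vec_nth])

lemma qK_self: "qK a a = (3 * (norm a)^2) *\<^sub>R axis 1 1"
  using quat_norm_sq[of a] by (simp add: qK_def quat_eq_iff power2_eq_square algebra_simps)

lemma qmult_one_left [simp]: "axis 1 1 \<star> x = x" by (simp add: quat_eq_iff)
lemma qmult_one_right [simp]: "x \<star> axis 1 1 = x" by (simp add: quat_eq_iff)

definition qdBx :: "(quat \<Rightarrow> quat \<Rightarrow> quat) \<Rightarrow> (quat \<Rightarrow> real) \<Rightarrow> (quat \<Rightarrow> quat) \<Rightarrow> quat \<Rightarrow> quat \<Rightarrow> quat \<Rightarrow> quat" where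
  "qdBx B C f a b x = (1/2) *\<^sub>R (B a x \<star> B b x) + (C x / 3) *\<^sub>R qK (dderiv a f x) (dderiv b f x)"

locale qs =
  fixes U :: "quat set" and f :: "quat \<Rightarrow> quat"
    and B :: "quat \<Rightarrow> quat \<Rightarrow> quat" and C :: "quat \<Rightarrow> real"
  assumes op: "open U" and sm: "smooth_on U f"
    and AB: "\<And>\<alpha> x. x \<in> U \<Longrightarrow>
       ((\<lambda>t. dderiv \<alpha> f (x + t *\<^sub>R \<alpha>)) has_vector_derivative (B \<alpha> x \<star> dderiv \<alpha> f x)) (at 0)"
    and BC: "\<And>\<alpha> \<beta> x. x \<in> U \<Longrightarrow>
       ((\<lambda>t. B \<beta> (x + t *\<^sub>R \<alpha>)) has_vector_derivative
          ((1/2) *\<^sub>R (B \<alpha> x \<star> B \<beta> x)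
           + (C x / 3) *\<^sub>R (qcnj (dderiv \<alpha> f x) \<star> dderiv \<beta> f x
                            + qcnj (dderiv \<beta> f x) \<star> dderiv \<alpha> f x
                            + dderiv \<alpha> f x \<star> qcnj (dderiv \<beta> f x)))) (at 0)"
    and U0: "0 \<in> U"
    and A0: "\<And>\<alpha>. dderiv \<alpha> f 0 = \<alpha>"
begin

lemma BC': "x \<in> U \<Longrightarrow> ((\<lambda>t. B b (x + t *\<^sub>R a)) has_vector_derivative qdBx B C f a b x) (at 0)"
  using BC[of x b a] unfolding qdBx_def qK_def by simp

lemma F1: assumes x: "x \<in> U" shows "dpow [a,a] f x = B a x \<star> dderiv a f x"
proof -
  have h1: "((\<lambda>s. dderiv a f (x + s *\<^sub>R a)) has_vector_derivative dpow [a,a] f x) (at 0)"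
    using dpow_line0[OF sm op x, of "[a]" a] by simp
  show ?thesis using vector_derivative_unique_at[OF h1 AB[OF x]] .
qed

lemma open_line: "open {t::real. x + t *\<^sub>R a \<in> U}"
proof -
  have "open ((\<lambda>t::real. x + t *\<^sub>R a) -` U)"
    by (rule continuous_open_vimage[OF op]) (intro continuous_intros)
  then show ?thesis by (simp add: vimage_def)
qed

lemma F2: assumes x: "x \<in> U"
  shows "dpow [a,b,b] f x = qdBx B C f a b x \<star> dderiv b f x + B b x \<star> dpow [a,b] f x"
proof -
  have d2: "((\<lambda>t. dderiv b f (x + t *\<^sub>R a)) has_vector_derivative dpow [a,b] f x) (at 0)"
    using dpow_line0[OF sm op x, of "[b]" a] by simp
  have d3: "((\<lambda>t. B b (x + t *\<^sub>R a) \<star> dderiv b f (x + t *\<^sub>R a)) has_vector_derivative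
      (B b x \<star> dpow [a,b] f x + qdBx B C f a b x \<star> dderiv b f x)) (at 0)"
    using hvd_qmult[OF BC'[OF x] d2] by simp
  have d4: "((\<lambda>t. dpow [b,b] f (x + t *\<^sub>R a)) has_vector_derivative
      (B b x \<star> dpow [a,b] f x + qdBx B C f a b x \<star> dderiv b f x)) (at 0)"
  proof (rule has_vector_derivative_transform_within_open[OF d3 open_line])
    show "0 \<in> {t. x + t *\<^sub>R a \<in> U}" using x by simp
    fix t assume "t \<in> {t. x + t *\<^sub>R a \<in> U}"
    then show "B b (x + t *\<^sub>R a) \<star> dderiv b f (x + t *\<^sub>R a) = dpow [b,b] f (x + t *\<^sub>R a)"
      using F1[of "x + t *\<^sub>R a" b] by simp
  qed
  have d5: "((\<lambda>t. dpow [b,b] f (x + t *\<^sub>R a)) has_vector_derivative dpow [a,b,b] f x) (at 0)"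
    using dpow_line0[OF sm op x, of "[b,b]" a] by simp
  show ?thesis using vector_derivative_unique_at[OF d5 d4] by simp
qed

lemma b0: "B 0 0 = 0"
proof -
  have h: "((\<lambda>t. B 0 (0 + t *\<^sub>R 0)) has_vector_derivative qdBx B C f 0 0 0) (at 0)"
    by (rule BC'[OF U0])
  have h2: "((\<lambda>t. B 0 (0 + t *\<^sub>R 0)) has_vector_derivative 0) (at 0)"
    by simp
  have "qdBx B C f 0 0 0 = 0" using vector_derivative_unique_at[OF h h2] .
  then have "(1/2) *\<^sub>R (B 0 0 \<star> B 0 0) = 0"
    by (simp add: qdBx_def A0 qK_def)
  then show ?thesis by (simp add: qmult_eq_0_iff)
qed


lemma Cderiv: "\<exists>k. ((\<lambda>t. C (t *\<^sub>R g)) has_real_derivative k) (at 0)"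
proof -
  define u :: quat where "u = axis 1 1"
  define A where "A t = dderiv u f (t *\<^sub>R g)" for t
  define R where "R t = dpow [u,u,u] f (t *\<^sub>R g) - (1/2) *\<^sub>R ((B u (t *\<^sub>R g) \<star> B u (t *\<^sub>R g)) \<star> A t)
      - B u (t *\<^sub>R g) \<star> dpow [u,u] f (t *\<^sub>R g)" for t
  define d where "d t = ((A t $ 1)^2 + (A t $ 2)^2 + (A t $ 3)^2 + (A t $ 4)^2) * A t $ 1" for t
  have key: "C (t *\<^sub>R g) * d t = R t $ 1" if tU: "t *\<^sub>R g \<in> U" for t
  proof -
    have "R t = (C (t *\<^sub>R g) * (norm (A t))^2) *\<^sub>R A t"
      using F2[OF tU, of u u] unfolding R_def A_def u_def
      by (simp add: qdBx_def qK_self qmult_add_left qmult_scaleR_left algebra_simps)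
    then have "R t $ 1 = C (t *\<^sub>R g) * ((norm (A t))^2 * A t $ 1)" by simp
    then show ?thesis using quat_norm_sq[of "A t"] by (simp add: d_def)
  qed
  have dA: "(A has_vector_derivative dpow [g,u] f 0) (at 0)"
    using dpow_line0[OF sm op U0, of "[u]" g] by (simp add: A_def[abs_def])
  have dB: "((\<lambda>t. B u (t *\<^sub>R g)) has_vector_derivative qdBx B C f g u 0) (at 0)"
    using BC'[OF U0, of u g] by simp
  have d2: "((\<lambda>t. dpow [u,u] f (t *\<^sub>R g)) has_vector_derivative dpow [g,u,u] f 0) (at 0)"
    using dpow_line0[OF sm op U0, of "[u,u]" g] by simp
  have d3: "((\<lambda>t. dpow [u,u,u] f (t *\<^sub>R g)) has_vector_derivative dpow [g,u,u,u] f 0) (at 0)"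
    using dpow_line0[OF sm op U0, of "[u,u,u]" g] by simp
  note h2 = has_vector_derivative_scaleR[OF DERIV_const[of "1/2"] hvd_qmult[OF hvd_qmult[OF dB dB] dA]]
  have "\<exists>D. (R has_vector_derivative D) (at 0)"
    unfolding R_def[abs_def]
    by (rule exI, rule has_vector_derivative_diff[OF has_vector_derivative_diff[OF d3 h2] hvd_qmult[OF dB d2]])
  then obtain DR where DR: "(R has_vector_derivative DR) (at 0)" by blast
  have hR1: "((\<lambda>t. R t $ 1) has_field_derivative DR $ 1) (at 0)" by (rule hvd_nth[OF DR])
  have "\<exists>Dd. (d has_field_derivative Dd) (at 0)"
    unfolding d_def[abs_def]
    by (rule exI, rule DERIV_mult[OF DERIV_add[OF DERIV_add[OF DERIV_add[OF
         DERIV_power[OF hvd_nth[OF dA]] DERIV_power[OF hvd_nth[OF dA]]] DERIV_power[OF hvd_nth[OF dA]]]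
         DERIV_power[OF hvd_nth[OF dA]]] hvd_nth[OF dA]])
  then obtain Dd where Dd: "(d has_field_derivative Dd) (at 0)" by blast
  have d0: "d 0 = 1" using A0[of u] by (simp add: d_def A_def u_def)
  have hq: "((\<lambda>t. R t $ 1 / d t) has_field_derivative (DR $ 1 * d 0 - R 0 $ 1 * Dd) / (d 0 * d 0)) (at 0)"
    by (rule DERIV_divide[OF hR1 Dd]) (simp add: d0)
  have cd: "isCont d 0" by (rule DERIV_isCont[OF Dd])
  obtain e1 where e1: "e1 > 0" "\<And>t. dist t 0 < e1 \<Longrightarrow> dist (d t) (d 0) < 1/2"
    using cd unfolding continuous_at_eps_delta by (metis half_gt_zero_iff zero_less_one)
  obtain e2 where e2: "e2 > 0" "ball 0 e2 \<subseteq> {t. 0 + t *\<^sub>R g \<in> U}"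
    using open_line[of 0 g] U0 by (auto elim!: openE)
  have "((\<lambda>t. C (t *\<^sub>R g)) has_field_derivative (DR $ 1 * d 0 - R 0 $ 1 * Dd) / (d 0 * d 0)) (at 0 within UNIV)"
  proof (rule has_field_derivative_transform_within[OF _ _ UNIV_I])
    show "((\<lambda>t. R t $ 1 / d t) has_field_derivative (DR $ 1 * d 0 - R 0 $ 1 * Dd) / (d 0 * d 0)) (at 0 within UNIV)"
      using hq by simp
    show "0 < min e1 e2" using e1 e2 by simp
    fix t :: real assume "dist t 0 < min e1 e2"
    then have t1: "dist t 0 < e1" and t2: "t \<in> ball 0 e2" by (auto simp: dist_commute)
    have tU: "t *\<^sub>R g \<in> U" using e2(2) t2 by auto
    have "d t \<noteq> 0" using e1(2)[OF t1] d0 by (auto simp: dist_real_def)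
    then show "R t $ 1 / d t = C (t *\<^sub>R g)" using key[OF tU] by (simp add: field_simps)
  qed
  then show ?thesis by auto
qed

lemma F5:
  assumes hk: "((\<lambda>t. C (t *\<^sub>R g)) has_real_derivative k) (at 0)"
  shows "dpow [g,a,b,b] f 0 = qForm (C 0) k g a b (B g 0) (B a 0) (B b 0) (dpow [g,a] f 0) (dpow [g,b] f 0) (dpow [a,b] f 0)
           + B b 0 \<star> dpow [g,a,b] f 0"
proof -
  define P where "P t = qdBx B C f a b (t *\<^sub>R g) \<star> dderiv b f (t *\<^sub>R g) + B b (t *\<^sub>R g) \<star> dpow [a,b] f (t *\<^sub>R g)" for t
  have dBa: "((\<lambda>t. B a (t *\<^sub>R g)) has_vector_derivative qdBx B C f g a 0) (at 0)"
    using BC'[OF U0, of a g] by simp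
  have dBb: "((\<lambda>t. B b (t *\<^sub>R g)) has_vector_derivative qdBx B C f g b 0) (at 0)"
    using BC'[OF U0, of b g] by simp
  have dAa: "((\<lambda>t. dderiv a f (t *\<^sub>R g)) has_vector_derivative dpow [g,a] f 0) (at 0)"
    using dpow_line0[OF sm op U0, of "[a]" g] by simp
  have dAb: "((\<lambda>t. dderiv b f (t *\<^sub>R g)) has_vector_derivative dpow [g,b] f 0) (at 0)"
    using dpow_line0[OF sm op U0, of "[b]" g] by simp
  have dT: "((\<lambda>t. dpow [a,b] f (t *\<^sub>R g)) has_vector_derivative dpow [g,a,b] f 0) (at 0)"
    using dpow_line0[OF sm op U0, of "[a,b]" g] by simp
  have dP: "(P has_vector_derivative
      (qForm (C 0) k g a b (B g 0) (B a 0) (B b 0) (dpow [g,a] f 0) (dpow [g,b] f 0) (dpow [a,b] f 0)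
           + B b 0 \<star> dpow [g,a,b] f 0)) (at 0)"
    unfolding P_def[abs_def] qdBx_def
    apply (rule has_vector_derivative_eq_rhs[OF has_vector_derivative_add[OF
             hvd_qmult[OF has_vector_derivative_add[OF
                has_vector_derivative_scaleR[OF DERIV_const[of "1/2"] hvd_qmult[OF dBa dBb]]
                has_vector_derivative_scaleR[OF DERIV_cdivide[OF hk, of 3] hvd_qK[OF dAa dAb]]] dAb]
             hvd_qmult[OF dBb dT]]])
    apply (simp add: A0 qForm_def qdB_def qdBx_def qmult_add_left qmult_add_right qmult_scaleR_left
        qmult_scaleR_right scaleR_add_right algebra_simps)
    done
  have dP': "((\<lambda>t. dpow [a,b,b] f (0 + t *\<^sub>R g)) has_vector_derivative
      (qForm (C 0) k g a b (B g 0) (B a 0) (B b 0) (dpow [g,a] f 0) (dpow [g,b] f 0) (dpow [a,b] f 0)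
           + B b 0 \<star> dpow [g,a,b] f 0)) (at 0)"
  proof (rule has_vector_derivative_transform_within_open[OF dP open_line[of 0 g]])
    show "0 \<in> {t. 0 + t *\<^sub>R g \<in> U}" using U0 by simp
    fix t assume "t \<in> {t. 0 + t *\<^sub>R g \<in> U}"
    then show "P t = dpow [a,b,b] f (0 + t *\<^sub>R g)" using F2[of "t *\<^sub>R g" a b] by (simp add: P_def)
  qed
  have d5: "((\<lambda>t. dpow [a,b,b] f (0 + t *\<^sub>R g)) has_vector_derivative dpow [g,a,b,b] f 0) (at 0)"
    using dpow_line0[OF sm op U0, of "[a,b,b]" g] by simp
  show ?thesis using vector_derivative_unique_at[OF d5 dP'] .
qed

end



lemma quat_basis: "(x::quat) = (\<Sum>i\<in>UNIV. x $ i *\<^sub>R axis i 1)"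
  using basis_expansion[of x] by (simp add: scalar_mult_eq_scaleR)

lemma linear_expand: "linear L \<Longrightarrow> L (x::quat) = (\<Sum>i\<in>UNIV. x $ i *\<^sub>R L (axis i 1))"
  by (subst quat_basis) (simp add: linear_sum linear_scale)

lemma dpow_fun_sum:
  fixes h :: "quat \<Rightarrow> 'b::real_normed_vector"
  assumes op: "open U" and sh: "smooth_on U h" and sh': "\<And>i. smooth_on U (h' i)"
    and eq: "\<And>z. z \<in> U \<Longrightarrow> h z = (\<Sum>i\<in>(UNIV::4 set). w i *\<^sub>R h' i z)"
  shows "z \<in> U \<Longrightarrow> dpow cs h z = (\<Sum>i\<in>UNIV. w i *\<^sub>R dpow cs (h' i) z)"
proof (induction cs arbitrary: z)
  case Nil then show ?case using eq by simp
next
  case (Cons c cs)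
  have d: "((\<lambda>z. \<Sum>i\<in>UNIV. w i *\<^sub>R dpow cs (h' i) z) has_derivative
            (\<lambda>v. \<Sum>i\<in>UNIV. w i *\<^sub>R dpow (v # cs) (h' i) z)) (at z)"
    by (intro has_derivative_sum has_derivative_scaleR_right dpow_has_derivative[OF sh' op Cons.prems])
  have d': "(dpow cs h has_derivative (\<lambda>v. \<Sum>i\<in>UNIV. w i *\<^sub>R dpow (v # cs) (h' i) z)) (at z)"
    by (rule has_derivative_transform_within_open[OF d op Cons.prems]) (simp add: Cons.IH)
  have d'': "(dpow cs h has_derivative (\<lambda>v. dpow (v # cs) h z)) (at z)"
    by (rule dpow_has_derivative[OF sh op Cons.prems])
  have "(\<lambda>v. dpow (v # cs) h z) = (\<lambda>v. \<Sum>i\<in>UNIV. w i *\<^sub>R dpow (v # cs) (h' i) z)"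
    using has_derivative_unique[OF d'' d'] .
  from fun_cong[OF this, of c] show ?case by simp
qed

lemma dpow3_expand:
  fixes g :: "quat \<Rightarrow> quat"
  assumes sm: "smooth_on U g" and op: "open U" and y: "y \<in> U"
  shows "dpow [x,x,x] g y = (\<Sum>i\<in>UNIV. \<Sum>j\<in>UNIV. \<Sum>k\<in>UNIV. (x$i * x$j * x$k) *\<^sub>R dpow [axis i 1, axis j 1, axis k 1] g y)"
proof -
  have s1: "dpow [x,x,x] g y = (\<Sum>i\<in>UNIV. x$i *\<^sub>R dpow [axis i 1, x, x] g y)"
    by (rule linear_expand[OF dpow_linear[OF sm op y]])
  have s2: "dpow [axis i 1, x, x] g y = (\<Sum>j\<in>UNIV. x$j *\<^sub>R dpow [axis i 1, axis j 1, x] g y)" for i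
  proof -
    have "dpow [axis i 1] (dpow [x,x] g) y = (\<Sum>j\<in>UNIV. x$j *\<^sub>R dpow [axis i 1] (dpow [axis j 1, x] g) y)"
    proof (rule dpow_fun_sum[OF op smooth_dpow[OF sm] smooth_dpow[OF sm] _ y])
      fix z assume z: "z \<in> U"
      show "dpow [x,x] g z = (\<Sum>j\<in>UNIV. x$j *\<^sub>R dpow [axis j 1, x] g z)"
        by (rule linear_expand[OF dpow_linear[OF sm op z]])
    qed
    then show ?thesis by (simp only: dpow.simps)
  qed
  have s3: "dpow [axis i 1, axis j 1, x] g y = (\<Sum>k\<in>UNIV. x$k *\<^sub>R dpow [axis i 1, axis j 1, axis k 1] g y)" for i j
  proof -
    have "dpow [axis i 1, axis j 1] (dpow [x] g) y = (\<Sum>k\<in>UNIV. x$k *\<^sub>R dpow [axis i 1, axis j 1] (dpow [axis k 1] g) y)"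
    proof (rule dpow_fun_sum[OF op smooth_dpow[OF sm] smooth_dpow[OF sm] _ y])
      fix z assume z: "z \<in> U"
      show "dpow [x] g z = (\<Sum>k\<in>UNIV. x$k *\<^sub>R dpow [axis k 1] g z)"
        by (rule linear_expand[OF dpow_linear[OF sm op z]])
    qed
    then show ?thesis by (simp only: dpow.simps)
  qed
  show ?thesis
    unfolding s1 s2 s3 by (simp add: scaleR_sum_right mult.assoc)
qed


lemma dpow_line_0:
  assumes "smooth_on U g" "open U" "t *\<^sub>R v \<in> U"
  shows "((\<lambda>s. dpow as g (s *\<^sub>R v)) has_vector_derivative dpow (v # as) g (t *\<^sub>R v)) (at t)"
  using dpow_line[OF assms(1,2), of 0 t v as] assms(3) by simp

lemma taylor3:
  fixes g :: "quat \<Rightarrow> quat"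
  assumes sm: "smooth_on U g" and op: "open U" and U0: "0 \<in> U" and g0: "g 0 = 0"
  shows "((\<lambda>x. (g x - (dpow [x] g 0 + (1/2) *\<^sub>R dpow [x,x] g 0 + (1/6) *\<^sub>R dpow [x,x,x] g 0)) /\<^sub>R (norm x ^ 3)) \<longlongrightarrow> 0) (at 0)"
proof (rule LIM_I)
  fix r :: real assume r: "r > 0"
  define e where "e = r / 128"
  have e: "e > 0" using r by (simp add: e_def)
  define D where "D ijk y = dpow [axis (fst ijk) 1, axis (fst (snd ijk)) 1, axis (snd (snd ijk)) 1] g y" for ijk :: "4 \<times> 4 \<times> 4" and y
  have ev: "eventually (\<lambda>y. dist (D ijk y) (D ijk 0) < e) (at 0)" for ijk
  proof -
    have "isCont (D ijk) 0" unfolding D_def by (rule dpow_continuous[OF sm op U0])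
    then show ?thesis unfolding isCont_def using e by (rule tendstoD)
  qed
  have "eventually (\<lambda>y. \<forall>ijk. dist (D ijk y) (D ijk 0) < e) (at 0)"
    by (rule eventually_all_finite) (rule ev)
  then obtain d1 where d1: "d1 > 0" "\<And>y. y \<noteq> 0 \<Longrightarrow> dist y 0 < d1 \<Longrightarrow> \<forall>ijk. dist (D ijk y) (D ijk 0) < e"
    unfolding eventually_at by auto
  obtain d2 where d2: "d2 > 0" "ball 0 d2 \<subseteq> U" using op U0 by (rule openE)
  define s where "s = min d1 d2"
  have s: "s > 0" using d1 d2 by (simp add: s_def)
  show "\<exists>s>0. \<forall>x. x \<noteq> 0 \<and> norm (x - 0) < s \<longrightarrow>
     norm ((g x - (dpow [x] g 0 + (1/2) *\<^sub>R dpow [x,x] g 0 + (1/6) *\<^sub>R dpow [x,x,x] g 0)) /\<^sub>R (norm x ^ 3) - 0) < r"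
  proof (intro exI[of _ s] conjI allI impI)
    show "s > 0" by (rule s)
    fix x :: quat assume x: "x \<noteq> 0 \<and> norm (x - 0) < s"
    then have x0: "x \<noteq> 0" and xs: "norm x < s" by auto
    have inU: "t *\<^sub>R x \<in> U" if "t \<in> {0..1}" for t
    proof -
      have "norm (t *\<^sub>R x) \<le> norm x" using that by (simp add: mult_left_le_one_le)
      then show ?thesis using xs d2 by (auto simp: s_def)
    qed
    define D1 where "D1 = dpow [x] g 0"
    define D2 where "D2 = dpow [x,x] g 0"
    define D3 where "D3 = dpow [x,x,x] g 0"
    define M where "M = 64 * e * norm x ^ 3"
    have bnd3: "norm (dpow [x,x,x] g (t *\<^sub>R x) - D3) \<le> M" if t: "t \<in> {0..1}" for t
    proof (cases "t = 0")
      case True then show ?thesis by (simp add: D3_def M_def e less_imp_le)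
    next
      case False
      have tx: "t *\<^sub>R x \<noteq> 0" using False x0 by simp
      have "dist (t *\<^sub>R x) 0 < d1"
      proof -
        have "norm (t *\<^sub>R x) \<le> norm x" using t by (simp add: mult_left_le_one_le)
        then show ?thesis using xs by (simp add: s_def)
      qed
      then have close: "\<forall>ijk. dist (D ijk (t *\<^sub>R x)) (D ijk 0) < e" using d1(2) tx by blast
      have "dpow [x,x,x] g (t *\<^sub>R x) - D3 =
          (\<Sum>i\<in>UNIV. \<Sum>j\<in>UNIV. \<Sum>k\<in>UNIV. (x$i * x$j * x$k) *\<^sub>R (D (i,j,k) (t *\<^sub>R x) - D (i,j,k) 0))"
        unfolding D3_def dpow3_expand[OF sm op inU[OF t]] dpow3_expand[OF sm op U0] D_def
        by (simp add: sum_subtractf scaleR_diff_right)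
      also have "norm \<dots> \<le> (\<Sum>i\<in>(UNIV::4 set). \<Sum>j\<in>(UNIV::4 set). \<Sum>k\<in>(UNIV::4 set). norm x ^ 3 * e)"
      proof (rule order_trans[OF norm_sum sum_mono], rule order_trans[OF norm_sum sum_mono],
             rule order_trans[OF norm_sum sum_mono])
        fix i j k :: 4
        have a: "\<bar>x$i * x$j * x$k\<bar> \<le> norm x ^ 3"
          unfolding abs_mult power3_eq_cube
          by (intro mult_mono component_le_norm_cart) auto
        have b: "norm (D (i,j,k) (t *\<^sub>R x) - D (i,j,k) 0) \<le> e"
          using close[rule_format, of "(i,j,k)"] by (simp add: dist_norm)
        show "norm ((x$i * x$j * x$k) *\<^sub>R (D (i,j,k) (t *\<^sub>R x) - D (i,j,k) 0)) \<le> norm x ^ 3 * e"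
          unfolding norm_scaleR by (rule mult_mono[OF a b]) auto
      qed
      also have "\<dots> = M" by (simp add: M_def)
      finally show ?thesis .
    qed
    have M0: "M \<ge> 0" using e by (simp add: M_def)
    define p2 where "p2 t = dpow [x,x] g (t *\<^sub>R x) - t *\<^sub>R D3" for t
    have dp2: "(p2 has_vector_derivative (dpow [x,x,x] g (t *\<^sub>R x) - D3)) (at t)" if t: "t \<in> {0..1}" for t
      unfolding p2_def[abs_def]
      by (rule has_vector_derivative_diff[OF dpow_line_0[OF sm op inU[OF t]]])
         (auto intro!: derivative_eq_intros)
    have b2: "norm (p2 t - D2) \<le> M" if t: "t \<in> {0..1}" for t
    proof -
      have "norm (p2 t - p2 0) \<le> M * (t - 0)"
        by (rule mvb) (use t in \<open>auto intro!: dp2 bnd3\<close>)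
      also have "\<dots> \<le> M" using t M0 by (simp add: mult_left_le)
      finally show ?thesis by (simp add: p2_def D2_def)
    qed
    define p1 where "p1 t = dpow [x] g (t *\<^sub>R x) - t *\<^sub>R D2 - (t^2/2) *\<^sub>R D3" for t
    have dp1: "(p1 has_vector_derivative (p2 t - D2)) (at t)" if t: "t \<in> {0..1}" for t
    proof -
      have "(p1 has_vector_derivative (dpow [x,x] g (t *\<^sub>R x) - D2 - (2 * t / 2) *\<^sub>R D3)) (at t)"
        unfolding p1_def[abs_def]
        by (rule has_vector_derivative_diff[OF has_vector_derivative_diff[OF dpow_line_0[OF sm op inU[OF t]]]])
           (auto intro!: derivative_eq_intros)
      then show ?thesis by (simp add: p2_def algebra_simps)
    qed
    have b1: "norm (p1 t - D1) \<le> M" if t: "t \<in> {0..1}" for t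
    proof -
      have "norm (p1 t - p1 0) \<le> M * (t - 0)"
        by (rule mvb) (use t in \<open>auto intro!: dp1 b2\<close>)
      also have "\<dots> \<le> M" using t M0 by (simp add: mult_left_le)
      finally show ?thesis by (simp add: p1_def D1_def)
    qed
    define p0 where "p0 t = g (t *\<^sub>R x) - t *\<^sub>R D1 - (t^2/2) *\<^sub>R D2 - (t^3/6) *\<^sub>R D3" for t
    have dp0: "(p0 has_vector_derivative (p1 t - D1)) (at t)" if t: "t \<in> {0..1}" for t
    proof -
      have "(p0 has_vector_derivative (dderiv x g (t *\<^sub>R x) - D1 - (2 * t / 2) *\<^sub>R D2 - (3 * t^2 / 6) *\<^sub>R D3)) (at t)"
        unfolding p0_def[abs_def]
        by (rule has_vector_derivative_diff[OF has_vector_derivative_diff[OF has_vector_derivative_diff[OF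
            dpow_line_0[OF sm op inU[OF t], of "[]", simplified]]]])
           (auto intro!: derivative_eq_intros)
      then show ?thesis by (simp add: p1_def algebra_simps power2_eq_square)
    qed
    have "norm (p0 1 - p0 0) \<le> M * (1 - 0)"
      by (rule mvb) (auto intro!: dp0 b1)
    then have main: "norm (g x - (D1 + (1/2) *\<^sub>R D2 + (1/6) *\<^sub>R D3)) \<le> M"
      by (simp add: p0_def g0 algebra_simps)
    have nx: "norm x ^ 3 > 0" using x0 by simp
    have eqn: "norm (w /\<^sub>R (norm x ^ 3)) = norm w / norm x ^ 3" for w :: quat
      by (simp add: divide_inverse_commute)
    have "norm ((g x - (D1 + (1/2) *\<^sub>R D2 + (1/6) *\<^sub>R D3)) /\<^sub>R (norm x ^ 3)) \<le> M / norm x ^ 3"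
      unfolding eqn by (rule divide_right_mono[OF main less_imp_le[OF nx]])
    also have "\<dots> = 64 * e" using nx unfolding M_def by (simp add: field_simps)
    also have "\<dots> < r" using r by (simp add: e_def)
    finally have fin: "norm ((g x - (D1 + (1/2) *\<^sub>R D2 + (1/6) *\<^sub>R D3)) /\<^sub>R (norm x ^ 3)) < r" .
    show "norm ((g x - (dpow [x] g 0 + (1/2) *\<^sub>R dpow [x,x] g 0 + (1/6) *\<^sub>R dpow [x,x,x] g 0)) /\<^sub>R (norm x ^ 3) - 0) < r"
      using fin unfolding D1_def D2_def D3_def by simp
  qed
qed



lemma linear_cancel:
  fixes h :: "quat \<Rightarrow> quat"
  assumes w: "w \<noteq> 0" and l: "linear (\<lambda>a. h a \<star> w)"
  shows "linear h"
proof (rule linearI)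
  fix x y :: quat
  have "h (x + y) \<star> w = (h x + h y) \<star> w"
    using linear_add[OF l, of x y] by (simp add: qmult_add_left)
  then show "h (x + y) = h x + h y" using qmult_cancel_right[OF w] by blast
next
  fix r :: real and x :: quat
  have "h (r *\<^sub>R x) \<star> w = (r *\<^sub>R h x) \<star> w"
    using linear_scale[OF l, of r x] by (simp add: qmult_scaleR_left)
  then show "h (r *\<^sub>R x) = r *\<^sub>R h x" using qmult_cancel_right[OF w] by blast
qed

lemma qK_add_left: "qK (x + y) z = qK x z + qK y z"
  by (simp add: qK_def quat_eq_iff algebra_simps)
lemma qK_scaleR_left: "qK (r *\<^sub>R x) z = r *\<^sub>R qK x z"
  by (simp add: qK_def quat_eq_iff algebra_simps)

lemma qreal_axis: "qreal r = r *\<^sub>R axis 1 1"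
  by (simp add: quat_eq_iff)

context qs
begin

lemma S_diag: "dpow [a,a] f 0 = B a 0 \<star> a"
  using F1[OF U0, of a] by (simp add: A0)

lemmas S_diag' = S_diag[simplified]

lemma b_linear: "linear (\<lambda>a. B a 0)"
proof (cases "\<exists>\<beta>. B \<beta> 0 \<star> \<beta> \<noteq> 0")
  case True
  then obtain \<beta> where w: "B \<beta> 0 \<star> \<beta> \<noteq> 0" by blast
  define L where "L a = 2 *\<^sub>R (dpow [a,\<beta>,\<beta>] f 0 - ((C 0 / 3) *\<^sub>R qK a \<beta>) \<star> \<beta> - B \<beta> 0 \<star> dpow [a,\<beta>] f 0)" for a
  have eq: "B a 0 \<star> (B \<beta> 0 \<star> \<beta>) = L a" for a
    using F2[OF U0, of a \<beta>] unfolding L_def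
    by (simp add: qdBx_def A0 qmult_add_left qmult_scaleR_left qmult_assoc algebra_simps)
  have l1: "linear (\<lambda>a. dpow [a,\<beta>,\<beta>] f 0)" by (rule dpow_linear[OF sm op U0])
  have l2: "linear (\<lambda>a. dpow [a,\<beta>] f 0)" by (rule dpow_linear[OF sm op U0])
  have "linear L"
  proof (rule linearI)
    fix x y :: quat
    show "L (x + y) = L x + L y"
      unfolding L_def using linear_add[OF l1, of x y] linear_add[OF l2, of x y]
      by (simp add: qK_add_left qmult_add_left qmult_add_right scaleR_add_right algebra_simps)
  next
    fix r :: real and x :: quat
    show "L (r *\<^sub>R x) = r *\<^sub>R L x"
      unfolding L_def using linear_scale[OF l1, of r x] linear_scale[OF l2, of r x]
      by (simp add: qK_scaleR_left qmult_scaleR_left qmult_scaleR_right algebra_simps)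
  qed
  moreover have "(\<lambda>a. B a 0 \<star> (B \<beta> 0 \<star> \<beta>)) = L" using eq by auto
  ultimately have "linear (\<lambda>a. B a 0 \<star> (B \<beta> 0 \<star> \<beta>))" by simp
  then show ?thesis by (rule linear_cancel[OF w])
next
  case False
  have "B a 0 = 0" for a
  proof (cases "a = 0")
    case True then show ?thesis using b0 by simp
  next
    case False
    then show ?thesis using \<open>\<not> (\<exists>\<beta>. B \<beta> 0 \<star> \<beta> \<noteq> 0)\<close> by (auto simp: qmult_eq_0_iff)
  qed
  then have "(\<lambda>a. B a 0) = (\<lambda>a. 0)" by auto
  then show ?thesis by (simp add: linear_zero)
qed

lemma S_pol: "dpow [g,a] f 0 = (1/2) *\<^sub>R (B g 0 \<star> a + B a 0 \<star> g)"
proof -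
  have l: "linear (\<lambda>v. dpow [v,y] f 0)" for y by (rule dpow_linear[OF sm op U0])
  have sym: "dpow [x,y] f 0 = dpow [y,x] f 0" for x y by (rule dpow_sym[OF sm op U0])
  have "dpow [g+a, g+a] f 0 = dpow [g, g+a] f 0 + dpow [a, g+a] f 0"
    by (rule linear_add[OF l])
  also have "dpow [g, g+a] f 0 = dpow [g, g] f 0 + dpow [a, g] f 0"
    using sym[of g "g+a"] linear_add[OF l, of g a g] by simp
  also have "dpow [a, g+a] f 0 = dpow [g, a] f 0 + dpow [a, a] f 0"
    using sym[of a "g+a"] linear_add[OF l, of g a a] by simp
  finally have e1: "dpow [g+a, g+a] f 0 = dpow [g,g] f 0 + 2 *\<^sub>R dpow [g,a] f 0 + dpow [a,a] f 0"
    using sym[of a g] by (simp add: scaleR_2 algebra_simps)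
  have "B (g + a) 0 = B g 0 + B a 0" by (rule linear_add[OF b_linear])
  then have "dpow [g+a, g+a] f 0 = B g 0 \<star> g + B g 0 \<star> a + B a 0 \<star> g + B a 0 \<star> a"
    by (simp add: S_diag' qmult_add_left qmult_add_right algebra_simps)
  with e1 have "2 *\<^sub>R dpow [g,a] f 0 = B g 0 \<star> a + B a 0 \<star> g"
    by (simp add: S_diag' algebra_simps)
  then have "(1/2) *\<^sub>R (2 *\<^sub>R dpow [g,a] f 0) = (1/2) *\<^sub>R (B g 0 \<star> a + B a 0 \<star> g)" by simp
  then show ?thesis by simp
qed

lemma T_diag: "dpow [x,x,x] f 0 = ((3/2) *\<^sub>R (B x 0 \<star> B x 0) + qreal (C 0 * (norm x)^2)) \<star> x"
proof -
  define Y where "Y = (B x 0 \<star> B x 0) \<star> x"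
  have h: "dpow [x,x,x] f 0 = qdBx B C f x x 0 \<star> x + B x 0 \<star> (B x 0 \<star> x)"
    using F2[OF U0, of x x] S_diag[of x] by (simp add: A0)
  have q: "qdBx B C f x x 0 = (1/2) *\<^sub>R (B x 0 \<star> B x 0) + (C 0 * (norm x)^2) *\<^sub>R axis 1 1"
    unfolding qdBx_def A0 qK_self by simp
  have q2: "qdBx B C f x x 0 \<star> x = (1/2) *\<^sub>R Y + (C 0 * (norm x)^2) *\<^sub>R x"
    unfolding q Y_def by (simp only: qmult_add_left qmult_scaleR_left qmult_one_left)
  have r: "((3/2) *\<^sub>R (B x 0 \<star> B x 0) + qreal (C 0 * (norm x)^2)) \<star> x = (3/2) *\<^sub>R Y + (C 0 * (norm x)^2) *\<^sub>R x"
    unfolding Y_def by (simp only: qmult_add_left qmult_scaleR_left qreal_mult)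
  have a: "B x 0 \<star> (B x 0 \<star> x) = Y" unfolding Y_def by (simp only: qmult_assoc)
  have th: "(3/2::real) = 1/2 + 1" by simp
  have "(1/2) *\<^sub>R Y + (C 0 * (norm x)^2) *\<^sub>R x + Y = (3/2) *\<^sub>R Y + (C 0 * (norm x)^2) *\<^sub>R x"
    unfolding th scaleR_add_left scaleR_one by (simp only: add_ac)
  then show ?thesis unfolding h q2 a r .
qed


lemma form_eq:
  fixes e :: quat
  assumes hk1: "((\<lambda>t. C (t *\<^sub>R axis 1 1)) has_real_derivative k1) (at 0)"
      and hk2: "((\<lambda>t. C (t *\<^sub>R e)) has_real_derivative k2) (at 0)"
  shows "qForm (C 0) k1 (axis 1 1) e (axis 1 1) (B (axis 1 1) 0) (B e 0) (B (axis 1 1) 0)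
            (qS (B (axis 1 1) 0) (B e 0) (axis 1 1) e) (qS (B (axis 1 1) 0) (B (axis 1 1) 0) (axis 1 1) (axis 1 1))
            (qS (B (axis 1 1) 0) (B e 0) (axis 1 1) e)
       = qForm (C 0) k2 e (axis 1 1) (axis 1 1) (B e 0) (B (axis 1 1) 0) (B (axis 1 1) 0)
            (qS (B (axis 1 1) 0) (B e 0) (axis 1 1) e) (qS (B (axis 1 1) 0) (B e 0) (axis 1 1) e)
            (qS (B (axis 1 1) 0) (B (axis 1 1) 0) (axis 1 1) (axis 1 1))"
proof -
  have s1: "dpow [axis 1 1, e] f 0 = qS (B (axis 1 1) 0) (B e 0) (axis 1 1) e"
    unfolding qS_def by (rule S_pol)
  have s2: "dpow [e, axis 1 1] f 0 = qS (B (axis 1 1) 0) (B e 0) (axis 1 1) e"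
    unfolding qS_def S_pol by (simp add: add.commute)
  have s3: "dpow [axis 1 1, axis 1 1] f 0 = qS (B (axis 1 1) 0) (B (axis 1 1) 0) (axis 1 1) (axis 1 1)"
    unfolding qS_def by (rule S_pol)
  have sym4: "dpow [axis 1 1, e, axis 1 1, axis 1 1] f 0 = dpow [e, axis 1 1, axis 1 1, axis 1 1] f 0"
    using dpow_sym[OF smooth_dpow[OF sm, of "[axis 1 1, axis 1 1]"] op U0, of "axis 1 1" e] by simp
  have sym3: "dpow [axis 1 1, e, axis 1 1] f 0 = dpow [e, axis 1 1, axis 1 1] f 0"
    using dpow_sym[OF smooth_dpow[OF sm, of "[axis 1 1]"] op U0, of "axis 1 1" e] by simp
  note e1 = F5[OF hk1, of e "axis 1 1", unfolded s1 s2 s3]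
  note e2 = F5[OF hk2, of "axis 1 1" "axis 1 1", unfolded s1 s2 s3 sym3[symmetric]]
  show ?thesis using e1 e2 sym4 by simp
qed

lemma part1:
  assumes C0: "C 0 \<noteq> 0"
  shows "\<exists>(p :: quat \<Rightarrow> real) q. linear p \<and> (\<forall>\<alpha>. B \<alpha> 0 = qreal (p \<alpha>) + \<alpha> \<star> q)"
proof -
  have "\<forall>g. \<exists>k. ((\<lambda>t. C (t *\<^sub>R g)) has_real_derivative k) (at 0)" using Cderiv by blast
  then obtain k where hk: "\<And>g. ((\<lambda>t. C (t *\<^sub>R g)) has_real_derivative k g) (at 0)" by metis
  note a2 = alg2[OF form_eq[OF hk[of "axis 1 1"] hk[of "axis 2 1"]]]
  note a3 = alg3[OF form_eq[OF hk[of "axis 1 1"] hk[of "axis 3 1"]]]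
  note a4 = alg4[OF form_eq[OF hk[of "axis 1 1"] hk[of "axis 4 1"]]]
  define c where "c = C 0"
  define k1 where "k1 = k (axis 1 1)"
  define k2 where "k2 = k (axis 2 1)"
  define k3 where "k3 = k (axis 3 1)"
  define k4 where "k4 = k (axis 4 1)"
  define b1 where "b1 = B (axis 1 1) 0"
  define b2 where "b2 = B (axis 2 1) 0"
  define b3 where "b3 = B (axis 3 1) 0"
  define b4 where "b4 = B (axis 4 1) 0"
  have c: "c \<noteq> 0" using C0 by (simp add: c_def)
  note a2 = a2[folded c_def k1_def k2_def b1_def b2_def]
  note a3 = a3[folded c_def k1_def k3_def b1_def b3_def]
  note a4 = a4[folded c_def k1_def k4_def b1_def b4_def]
  have v: "b1$2 = k2/(2*c)" "b1$3 = k3/(2*c)" "b1$4 = k4/(2*c)"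
     "b2$2 = -k1/(2*c)" "b3$3 = -k1/(2*c)" "b4$4 = -k1/(2*c)"
    using a2(1,2) a3(1,3) a4(1,4) c by (simp_all add: field_simps)
  have v2: "b2$3 = -k4/(2*c)" "b2$4 = k3/(2*c)" "b3$2 = k4/(2*c)" "b3$4 = -k2/(2*c)"
     "b4$2 = -k3/(2*c)" "b4$3 = k2/(2*c)"
  proof -
    have z: "b2$3 + b1$4 = 0" "b2$4 - b1$3 = 0" "b3$2 - b1$4 = 0" "b1$2 + b3$4 = 0"
        "b4$2 + b1$3 = 0" "b4$3 - b1$2 = 0"
      using a2(3,4) a3(2,4) a4(2,3) c by auto
    show "b2$3 = -k4/(2*c)" "b2$4 = k3/(2*c)" "b3$2 = k4/(2*c)" "b3$4 = -k2/(2*c)"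
     "b4$2 = -k3/(2*c)" "b4$3 = k2/(2*c)"
      using z v by (simp_all add: algebra_simps)
  qed
  define q :: quat where "q = (1/(2*c)) *\<^sub>R vector [- k1, k2, k3, k4]"
  define p where "p a = (B a 0) $ 1 - (a \<star> q) $ 1" for a
  have lp: "linear p"
  proof (rule linearI)
    fix x y :: quat
    show "p (x + y) = p x + p y"
      unfolding p_def using linear_add[OF b_linear, of x y] by (simp add: qmult_add_left)
  next
    fix r :: real and x :: quat
    show "p (r *\<^sub>R x) = r *\<^sub>R p x"
      unfolding p_def using linear_scale[OF b_linear, of r x] by (simp add: qmult_scaleR_left algebra_simps)
  qed
  have "B a 0 = qreal (p a) + a \<star> q" for a
  proof -
    have ex: "B a 0 = a$1 *\<^sub>R b1 + a$2 *\<^sub>R b2 + a$3 *\<^sub>R b3 + a$4 *\<^sub>R b4"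
      using linear_expand[OF b_linear, of a] by (simp add: sum_4 b1_def b2_def b3_def b4_def)
    show ?thesis
      unfolding quat_eq_iff p_def
      by (simp add: ex v v2 q_def field_simps)
  qed
  with lp show ?thesis by blast
qed

end


theorem mainTheorem8:
  fixes U :: "quat set" and f :: "quat \<Rightarrow> quat"
    and B :: "quat \<Rightarrow> quat \<Rightarrow> quat" and C :: "quat \<Rightarrow> real"
  assumes diffeo: "smooth_diffeo U f"
    and arcs: "segments_to_arcs U f"
    and AB: "\<And>\<alpha> x. x \<in> U \<Longrightarrow>
       ((\<lambda>t. dderiv \<alpha> f (x + t *\<^sub>R \<alpha>)) has_vector_derivative (B \<alpha> x \<star> dderiv \<alpha> f x)) (at 0)"
    and BC: "\<And>\<alpha> \<beta> x. x \<in> U \<Longrightarrow>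
       ((\<lambda>t. B \<beta> (x + t *\<^sub>R \<alpha>)) has_vector_derivative
          ((1/2) *\<^sub>R (B \<alpha> x \<star> B \<beta> x)
           + (C x / 3) *\<^sub>R (qcnj (dderiv \<alpha> f x) \<star> dderiv \<beta> f x
                            + qcnj (dderiv \<beta> f x) \<star> dderiv \<alpha> f x
                            + dderiv \<alpha> f x \<star> qcnj (dderiv \<beta> f x)))) (at 0)"
    and U0: "0 \<in> U"
    and A0: "\<And>\<alpha>. dderiv \<alpha> f 0 = \<alpha>"
    and C0: "C 0 \<noteq> 0"
  shows "\<exists>(p :: quat \<Rightarrow> real) q. linear p \<and> (\<forall>\<alpha>. B \<alpha> 0 = qreal (p \<alpha>) + \<alpha> \<star> q) \<and>
     (f 0 = 0 \<longrightarrow>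
       ((\<lambda>x. (f x - (x + (1/2) *\<^sub>R ((qreal (p x) + x \<star> q) \<star> x)
                  + (1/6) *\<^sub>R (((3/2) *\<^sub>R ((qreal (p x) + x \<star> q) \<star> (qreal (p x) + x \<star> q))
                                + qreal (C 0 * (norm x)\<^sup>2)) \<star> x)))
              /\<^sub>R (norm x ^ 3)) \<longlongrightarrow> 0) (at 0))"
  proof -
  have op: "open U" and sm: "smooth_on U f" using diffeo unfolding smooth_diffeo_def by auto
  interpret Q: qs U f B C by (rule qs.intro[OF op sm AB BC U0 A0])
  obtain p q where lp: "linear p" and pq: "\<forall>\<alpha>. B \<alpha> 0 = qreal (p \<alpha>) + \<alpha> \<star> q"
    using Q.part1[OF C0] by blast
  show ?thesis
  proof (intro exI conjI impI)
    show "linear p" by (rule lp)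
    show "\<forall>\<alpha>. B \<alpha> 0 = qreal (p \<alpha>) + \<alpha> \<star> q" by (rule pq)
    assume f0: "f 0 = 0"
    have T: "((\<lambda>x. (f x - (dpow [x] f 0 + (1/2) *\<^sub>R dpow [x,x] f 0 + (1/6) *\<^sub>R dpow [x,x,x] f 0)) /\<^sub>R (norm x ^ 3)) \<longlongrightarrow> 0) (at 0)"
      by (rule taylor3[OF sm op U0 f0])
    have d1: "dpow [x] f 0 = x" for x using A0[of x] by simp
    have eq: "dpow [x] f 0 + (1/2) *\<^sub>R dpow [x,x] f 0 + (1/6) *\<^sub>R dpow [x,x,x] f 0 =
       x + (1/2) *\<^sub>R ((qreal (p x) + x \<star> q) \<star> x)
                  + (1/6) *\<^sub>R (((3/2) *\<^sub>R ((qreal (p x) + x \<star> q) \<star> (qreal (p x) + x \<star> q))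
                                + qreal (C 0 * (norm x)\<^sup>2)) \<star> x)" for x
      unfolding Q.S_diag Q.T_diag d1 pq[rule_format] ..
    show "((\<lambda>x. (f x - (x + (1/2) *\<^sub>R ((qreal (p x) + x \<star> q) \<star> x)
                  + (1/6) *\<^sub>R (((3/2) *\<^sub>R ((qreal (p x) + x \<star> q) \<star> (qreal (p x) + x \<star> q))
                                + qreal (C 0 * (norm x)\<^sup>2)) \<star> x)))
              /\<^sub>R (norm x ^ 3)) \<longlongrightarrow> 0) (at 0)"
      using T unfolding eq .
  qed
qed

end
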